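(* Let $k\ge 1$ and let $L=(l_1,\ldots,l_k)$ be a sequence of positive integers, and let $S=S(L)$ be the spider defined by $L$, with head $v_0$. Let $t$ be an integer with $1\le t\le \alpha(S)$. Then for every $1\le i\le k$ we have $$|\mathcal{I}^t_{v_0}(S)|\le |\mathcal{I}^t_{v_{i,l_i}}(S)|.$$
   Context: For a graph $G$, $\alpha(G)$ is the maximum size of an independent set in $G$, and for an integer $t\le\alpha(G)$, $\mathcal{I}^t(G)$ denotes the family of all independent sets of $G$ of size $t$. For a vertex $x$, $\mathcal{I}^t_x(G)$ denotes the subfamily of sets in $\mathcal{I}^t(G)$ containing $x$ (the star centered at $x$). Given a sequence of positive integers $L=(l_1,\ldots,l_k)$, the spider $S(L)$ is the tree consisting of a head vertex $v_0$ and, for each $1\le i\le k$, a leg which is the path $v_0,v_{i,1},v_{i,2},\ldots,v_{i,l_i}$; distinct legs share only $v_0$. *)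

theory Defs
  imports Main
begin

definition indep_set :: "'a set \<Rightarrow> ('a \<Rightarrow> 'a \<Rightarrow> bool) \<Rightarrow> 'a set \<Rightarrow> bool" where
  "indep_set V E I \<longleftrightarrow> I \<subseteq> V \<and> (\<forall>u\<in>I. \<forall>v\<in>I. \<not> E u v)"

definition indep_number :: "'a set \<Rightarrow> ('a \<Rightarrow> 'a \<Rightarrow> bool) \<Rightarrow> nat" where
  "indep_number V E = Max {card I | I. indep_set V E I}"

definition indep_family :: "'a set \<Rightarrow> ('a \<Rightarrow> 'a \<Rightarrow> bool) \<Rightarrow> nat \<Rightarrow> 'a set set" where
  "indep_family V E t = {I. indep_set V E I \<and> card I = t}"

definition indep_star :: "'a set \<Rightarrow> ('a \<Rightarrow> 'a \<Rightarrow> bool) \<Rightarrow> nat \<Rightarrow> 'a \<Rightarrow> 'a set set" where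
  "indep_star V E t x = {I \<in> indep_family V E t. x \<in> I}"

(* Spider S(L) for L = [l_1,...,l_k]: head v_0 = (0,0); v_{i,j} = (i,j)
   for 1 <= i <= k, 1 <= j <= l_i (where l_i = L ! (i-1)). *)
definition spider_verts :: "nat list \<Rightarrow> (nat \<times> nat) set" where
  "spider_verts L = {(0,0)} \<union> {(i,j). 1 \<le> i \<and> i \<le> length L \<and> 1 \<le> j \<and> j \<le> L ! (i - 1)}"

definition spider_adj :: "nat list \<Rightarrow> nat \<times> nat \<Rightarrow> nat \<times> nat \<Rightarrow> bool" where
  "spider_adj L u v \<longleftrightarrow> u \<in> spider_verts L \<and> v \<in> spider_verts L \<and>
     ((u = (0,0) \<and> fst v \<ge> 1 \<and> snd v = 1) \<or>
      (v = (0,0) \<and> fst u \<ge> 1 \<and> snd u = 1) \<or>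
      (fst u \<ge> 1 \<and> fst u = fst v \<and> (snd v = snd u + 1 \<or> snd u = snd v + 1)))"

end

theory Submission
  imports Defs
begin

definition sw :: "nat \<Rightarrow> nat \<Rightarrow> nat \<times> nat \<Rightarrow> nat \<times> nat" where
  "sw i l p = (if p = (0,0) then (i,l) else if p = (i,l) then (0,0)
     else if fst p = i \<and> 1 \<le> snd p \<and> snd p < l then (i, l - snd p) else p)"

lemma sw_invol: "1 \<le> i \<Longrightarrow> 1 \<le> l \<Longrightarrow> sw i l (sw i l p) = p"
  by (cases p) (auto simp: sw_def)

lemma sw_inj: "1 \<le> i \<Longrightarrow> 1 \<le> l \<Longrightarrow> inj (sw i l)"
  by (metis injI sw_invol)

lemma sw_verts:
  assumes "1 \<le> i" "i \<le> length L" "L ! (i-1) \<ge> 1" "p \<in> spider_verts L"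
  shows "sw i (L!(i-1)) p \<in> spider_verts L"
  using assms by (cases p) (auto simp: sw_def spider_verts_def)

lemma sw_adj:
  assumes "1 \<le> i" "i \<le> length L" "L ! (i-1) \<ge> 1"
    and "u \<in> spider_verts L" "v \<in> spider_verts L"
    and "\<not> spider_adj L u v" "\<not> spider_adj L (0,0) v" "\<not> spider_adj L (0,0) u"
    and "spider_adj L (sw i (L!(i-1)) u) (sw i (L!(i-1)) v)"
  shows False
  using assms by (cases u; cases v) (auto simp: sw_def spider_adj_def spider_verts_def split: if_splits)

lemma finite_verts: "finite (spider_verts L)"
proof -
  have "spider_verts L \<subseteq> {0..length L} \<times> {0..sum_list L}"
  proof (clarsimp simp: spider_verts_def)
    fix a b assume "Suc 0 \<le> a" "a \<le> length L" "b \<le> L ! (a - Suc 0)"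
    then have "L ! (a - Suc 0) \<le> sum_list L" by (intro elem_le_sum_list) auto
    then show "b \<le> sum_list L" using \<open>b \<le> _\<close> by linarith
  qed
  then show ?thesis by (rule finite_subset) auto
qed

theorem theorem2p2:
  fixes L :: "nat list" and t i :: nat
  assumes "length L \<ge> 1"
    and "\<forall>l \<in> set L. l > 0"
    and "1 \<le> t" and "t \<le> indep_number (spider_verts L) (spider_adj L)"
    and "1 \<le> i" and "i \<le> length L"
  shows "card (indep_star (spider_verts L) (spider_adj L) t (0,0))
         \<le> card (indep_star (spider_verts L) (spider_adj L) t (i, L ! (i - 1)))"
proof -
  define l where "l = L ! (i-1)"
  have l1: "l \<ge> 1" using assms(2,5,6) unfolding l_def
    by (metis Suc_le_eq diff_less less_le_trans nth_mem zero_less_one One_nat_def Suc_leI)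
  let ?V = "spider_verts L" and ?E = "spider_adj L"
  have inj: "inj (sw i l)" using sw_inj[OF assms(5) l1] .
  show ?thesis unfolding l_def[symmetric]
  proof (rule card_inj_on_le[where f = "image (sw i l)"])
    show "inj_on (image (sw i l)) (indep_star ?V ?E t (0,0))"
      by (meson inj inj_image_eq_iff inj_onI)
    show "finite (indep_star ?V ?E t (i, l))"
      by (rule finite_subset[of _ "Pow ?V"])
         (auto simp: indep_star_def indep_family_def indep_set_def finite_verts)
    show "image (sw i l) ` indep_star ?V ?E t (0,0) \<subseteq> indep_star ?V ?E t (i, l)"
    proof
      fix J assume "J \<in> image (sw i l) ` indep_star ?V ?E t (0,0)"
      then obtain I where J: "J = sw i l ` I" and I: "indep_set ?V ?E I" "card I = t" "(0,0) \<in> I"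
        by (auto simp: indep_star_def indep_family_def)
      have "card J = t" using J I inj by (simp add: card_image inj_on_subset)
      moreover have "(i,l) \<in> J" using J I(3) by (force simp: sw_def)
      moreover have "J \<subseteq> ?V" using J I(1) sw_verts[OF assms(5,6)] l1
        by (auto simp: indep_set_def l_def)
      moreover have "\<forall>u\<in>J. \<forall>v\<in>J. \<not> ?E u v"
      proof (intro ballI notI)
        fix u v assume "u \<in> J" "v \<in> J" "?E u v"
        then obtain a b where "a \<in> I" "b \<in> I" "?E (sw i l a) (sw i l b)" using J by auto
        then show False using sw_adj[OF assms(5,6), of a b] I(1,3) l1
          by (auto simp: indep_set_def l_def)
      qed
      ultimately show "J \<in> indep_star ?V ?E t (i, l)"
        by (simp add: indep_star_def indep_family_def indep_set_def)
    qed
  qed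
qed

end
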